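(* Let $\mathcal I$ and $\mathcal J$ be ideals on $\omega$ and let $X$ be a normal space. (1) If $\mathcal I\neq\mathcal J$, then $\mathrm{non}(\mathcal I\text{-p},\mathcal J\text{-u})=\mathrm{non}(\mathcal I\text{-qn},\mathcal J\text{-u})=\mathrm{non}(\mathcal I\text{-}\sigma\text{-u},\mathcal J\text{-u})=1$. (2) $X\in(\mathcal I\text{-p},\mathcal I\text{-u})\iff X\in(\mathcal I\text{-qn},\mathcal I\text{-u})\iff X\in(\mathcal I\text{-}\sigma\text{-u},\mathcal I\text{-u})\iff |X|<\omega$. (3) $\mathrm{non}(\mathcal I\text{-p},\mathcal I\text{-u})=\mathrm{non}(\mathcal I\text{-qn},\mathcal I\text{-u})=\mathrm{non}(\mathcal I\text{-}\sigma\text{-u},\mathcal I\text{-u})=\omega$. (4) There is no infinite normal space in any of the classes $(\mathcal I\text{-p},\mathcal I\text{-u})$, $(\mathcal I\text{-qn},\mathcal I\text{-u})$, $(\mathcal I\text{-}\sigma\text{-u},\mathcal I\text{-u})$.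
   Context: An ideal on $\omega$ is a family $\mathcal I\subseteq\mathcal P(\omega)$ closed under finite unions and subsets, containing all finite sets, with $\omega\notin\mathcal I$. For an ideal $\mathcal I$ on $\omega$, a real sequence $(a_n)$ is $\mathcal I$-convergent to $0$ if $\{n:|a_n|\ge\varepsilon\}\in\mathcal I$ for every $\varepsilon>0$. For a sequence $(f_n)$ of real-valued functions on a set $X$: $(f_n)$ is $\mathcal I$-pointwise convergent to $0$ (written $\mathcal I$-p) if $(f_n(x))$ is $\mathcal I$-convergent to $0$ for every $x\in X$; $\mathcal I$-uniformly convergent to $0$ ($\mathcal I$-u) if $\{n:\exists x\in X\,(|f_n(x)|\ge\varepsilon)\}\in\mathcal I$ for every $\varepsilon>0$; $\mathcal I$-$\sigma$-uniformly convergent to $0$ ($\mathcal I$-$\sigma$-u) if there are sets $X_k$ ($k\in\omega$) with $\bigcup_k X_k=X$ such that $(f_n\restriction X_k)$ is $\mathcal I$-uniformly convergent to $0$ for every $k$; $\mathcal I$-quasi-normally convergent to $0$ ($\mathcal I$-qn) if there is a sequence $(\varepsilon_n)$ of positive reals $\mathcal I$-convergent to $0$ such that $\{n:|f_n(x)|\ge\varepsilon_n\}\in\mathcal I$ for every $x\in X$. $\mathcal C(X)$ denotes the set of continuous real-valued functions on a space $X$. A normal space is a Hausdorff space in which any two disjoint closed sets have disjoint open neighbourhoods. For two convergence notions $\alpha,\beta$ from the list above (possibly with different ideals), $(\alpha,\beta)$ is the class of all normal spaces $X$ such that for every sequence $(f_n)$ in $\mathcal C(X)$, $(f_n)$ converges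 to $0$ in sense $\alpha$ iff it converges to $0$ in sense $\beta$; $\mathrm{non}(\alpha,\beta)$ is the least cardinality of a normal space not in $(\alpha,\beta)$ (and $\infty$ if there is none). *)

theory Defs
  imports "HOL-Analysis.Analysis"
begin

definition ideal_on_nat :: "nat set set \<Rightarrow> bool" where
  "ideal_on_nat I \<longleftrightarrow>
     (\<forall>A B. A \<in> I \<longrightarrow> B \<in> I \<longrightarrow> A \<union> B \<in> I) \<and>
     (\<forall>A B. A \<in> I \<longrightarrow> B \<subseteq> A \<longrightarrow> B \<in> I) \<and>
     (\<forall>A. finite A \<longrightarrow> A \<in> I) \<and>
     UNIV \<notin> I"

definition Iconv0 :: "nat set set \<Rightarrow> (nat \<Rightarrow> real) \<Rightarrow> bool" where
  "Iconv0 I a \<longleftrightarrow> (\<forall>\<epsilon>>0. {n. \<bar>a n\<bar> \<ge> \<epsilon>} \<in> I)"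

definition Iu_on :: "nat set set \<Rightarrow> 'a set \<Rightarrow> (nat \<Rightarrow> 'a \<Rightarrow> real) \<Rightarrow> bool" where
  "Iu_on I S f \<longleftrightarrow> (\<forall>\<epsilon>>0. {n. \<exists>x\<in>S. \<bar>f n x\<bar> \<ge> \<epsilon>} \<in> I)"

definition Ip :: "nat set set \<Rightarrow> 'a topology \<Rightarrow> (nat \<Rightarrow> 'a \<Rightarrow> real) \<Rightarrow> bool" where
  "Ip I X f \<longleftrightarrow> (\<forall>x\<in>topspace X. Iconv0 I (\<lambda>n. f n x))"

definition Iu :: "nat set set \<Rightarrow> 'a topology \<Rightarrow> (nat \<Rightarrow> 'a \<Rightarrow> real) \<Rightarrow> bool" where
  "Iu I X f \<longleftrightarrow> Iu_on I (topspace X) f"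

definition Isigu :: "nat set set \<Rightarrow> 'a topology \<Rightarrow> (nat \<Rightarrow> 'a \<Rightarrow> real) \<Rightarrow> bool" where
  "Isigu I X f \<longleftrightarrow>
     (\<exists>Xk :: nat \<Rightarrow> 'a set. (\<Union>k. Xk k) = topspace X \<and> (\<forall>k. Iu_on I (Xk k) f))"

definition Iqn :: "nat set set \<Rightarrow> 'a topology \<Rightarrow> (nat \<Rightarrow> 'a \<Rightarrow> real) \<Rightarrow> bool" where
  "Iqn I X f \<longleftrightarrow>
     (\<exists>e :: nat \<Rightarrow> real. (\<forall>n. e n > 0) \<and> Iconv0 I e \<and>
        (\<forall>x\<in>topspace X. {n. \<bar>f n x\<bar> \<ge> e n} \<in> I))"

definition normal_T2 :: "'a topology \<Rightarrow> bool" where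
  "normal_T2 X \<longleftrightarrow> Hausdorff_space X \<and> normal_space X"

definition in_class ::
  "('a topology \<Rightarrow> (nat \<Rightarrow> 'a \<Rightarrow> real) \<Rightarrow> bool) \<Rightarrow>
   ('a topology \<Rightarrow> (nat \<Rightarrow> 'a \<Rightarrow> real) \<Rightarrow> bool) \<Rightarrow> 'a topology \<Rightarrow> bool" where
  "in_class \<alpha> \<beta> X \<longleftrightarrow> normal_T2 X \<and>
     (\<forall>f. (\<forall>n. continuous_map X euclideanreal (f n)) \<longrightarrow> (\<alpha> X f \<longleftrightarrow> \<beta> X f))"

end

theory Submission
  imports Defs
begin

lemma ideal_fin: "ideal_on_nat I \<Longrightarrow> finite A \<Longrightarrow> A \<in> I"
  by (simp add: ideal_on_nat_def)
lemma ideal_sub: "ideal_on_nat I \<Longrightarrow> A \<in> I \<Longrightarrow> B \<subseteq> A \<Longrightarrow> B \<in> I"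
  unfolding ideal_on_nat_def by blast
lemma ideal_Un: "ideal_on_nat I \<Longrightarrow> A \<in> I \<Longrightarrow> B \<in> I \<Longrightarrow> A \<union> B \<in> I"
  unfolding ideal_on_nat_def by blast
lemma ideal_UNIV: "ideal_on_nat I \<Longrightarrow> UNIV \<notin> I"
  unfolding ideal_on_nat_def by blast

lemma ideal_UN_finite:
  assumes I: "ideal_on_nat I" and "finite S"
  shows "(\<forall>x\<in>S. F x \<in> I) \<longrightarrow> (\<Union>x\<in>S. F x) \<in> I"
  using assms(2)
proof (induction S rule: finite_induct)
  case empty
  then show ?case using ideal_fin[OF I] by simp
next
  case (insert x F)
  then show ?case using ideal_Un[OF I] by auto
qed

lemma inv_conv:
  assumes I: "ideal_on_nat I"
  shows "Iconv0 I (\<lambda>n. 1 / (real n + 1))"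
  unfolding Iconv0_def
proof (intro allI impI)
  fix e :: real assume e: "e > 0"
  have "{n. \<bar>1 / (real n + 1)\<bar> \<ge> e} \<subseteq> {..nat \<lceil>1/e\<rceil>}"
  proof
    fix n assume "n \<in> {n. \<bar>1 / (real n + 1)\<bar> \<ge> e}"
    then have "1 / (real n + 1) \<ge> e" by simp
    then have "e * (real n + 1) \<le> 1" using e by (simp add: field_simps)
    then have "real n \<le> 1/e" using e by (simp add: field_simps)
    then have "real n \<le> real (nat \<lceil>1/e\<rceil>)" by linarith
    then show "n \<in> {..nat \<lceil>1/e\<rceil>}" by simp
  qed
  then show "{n. \<bar>1 / (real n + 1)\<bar> \<ge> e} \<in> I"
    using ideal_fin[OF I] ideal_sub[OF I] by (meson finite_atMost)
qed

lemma Iqn_Ip: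
  assumes I: "ideal_on_nat I" and q: "Iqn I X f"
  shows "Ip I X f"
proof -
  obtain e where e: "\<forall>n. e n > 0" "Iconv0 I e" "\<forall>x\<in>topspace X. {n. \<bar>f n x\<bar> \<ge> e n} \<in> I"
    using q unfolding Iqn_def by blast
  show ?thesis unfolding Ip_def Iconv0_def
  proof (intro ballI allI impI)
    fix x and \<epsilon> :: real assume x: "x \<in> topspace X" and ep: "\<epsilon> > 0"
    have "{n. \<bar>f n x\<bar> \<ge> \<epsilon>} \<subseteq> {n. \<bar>f n x\<bar> \<ge> e n} \<union> {n. \<bar>e n\<bar> \<ge> \<epsilon>}"
      using e(1) by force
    moreover have "{n. \<bar>f n x\<bar> \<ge> e n} \<union> {n. \<bar>e n\<bar> \<ge> \<epsilon>} \<in> I"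
      using ideal_Un[OF I] e(2,3) x ep unfolding Iconv0_def by blast
    ultimately show "{n. \<bar>f n x\<bar> \<ge> \<epsilon>} \<in> I" using ideal_sub[OF I] by blast
  qed
qed

lemma Isigu_Ip:
  assumes I: "ideal_on_nat I" and q: "Isigu I X f"
  shows "Ip I X f"
proof -
  obtain Xk :: "nat \<Rightarrow> 'a set" where Xk: "(\<Union>k. Xk k) = topspace X" "\<forall>k. Iu_on I (Xk k) f"
    using q unfolding Isigu_def by blast
  show ?thesis unfolding Ip_def Iconv0_def
  proof (intro ballI allI impI)
    fix x and \<epsilon> :: real assume x: "x \<in> topspace X" and ep: "\<epsilon> > 0"
    have "x \<in> (\<Union>k. Xk k)" using x Xk(1) by simp
    then obtain k where k: "x \<in> Xk k" by (rule UN_E)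
    have "{n. \<bar>f n x\<bar> \<ge> \<epsilon>} \<subseteq> {n. \<exists>y\<in>Xk k. \<bar>f n y\<bar> \<ge> \<epsilon>}" using k by blast
    moreover have "{n. \<exists>y\<in>Xk k. \<bar>f n y\<bar> \<ge> \<epsilon>} \<in> I" using Xk(2) ep unfolding Iu_on_def by blast
    ultimately show "{n. \<bar>f n x\<bar> \<ge> \<epsilon>} \<in> I" using ideal_sub[OF I] by blast
  qed
qed

lemma Iu_Ip:
  assumes I: "ideal_on_nat I" and u: "Iu I X f"
  shows "Ip I X f"
  unfolding Ip_def Iconv0_def
proof (intro ballI allI impI)
  fix x and \<epsilon> :: real assume x: "x \<in> topspace X" and ep: "\<epsilon> > 0"
  have "{n. \<bar>f n x\<bar> \<ge> \<epsilon>} \<subseteq> {n. \<exists>y\<in>topspace X. \<bar>f n y\<bar> \<ge> \<epsilon>}" using x by blast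
  moreover have "{n. \<exists>y\<in>topspace X. \<bar>f n y\<bar> \<ge> \<epsilon>} \<in> I" using u ep unfolding Iu_def Iu_on_def by blast
  ultimately show "{n. \<bar>f n x\<bar> \<ge> \<epsilon>} \<in> I" using ideal_sub[OF I] by blast
qed

lemma Iu_Isigu: "Iu I X f \<Longrightarrow> Isigu I X f"
  unfolding Isigu_def Iu_def by (rule exI[of _ "\<lambda>k. topspace X"]) simp

lemma fin_Ip_Iu:
  assumes I: "ideal_on_nat I" and fin: "finite (topspace X)" and p: "Ip I X f"
  shows "Iu I X f"
  unfolding Iu_def Iu_on_def
proof (intro allI impI)
  fix \<epsilon> :: real assume ep: "\<epsilon> > 0"
  have eq: "{n. \<exists>x\<in>topspace X. \<bar>f n x\<bar> \<ge> \<epsilon>} = (\<Union>x\<in>topspace X. {n. \<bar>f n x\<bar> \<ge> \<epsilon>})" by blast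
  have all: "\<forall>x\<in>topspace X. {n. \<bar>f n x\<bar> \<ge> \<epsilon>} \<in> I"
    using p ep unfolding Ip_def Iconv0_def by blast
  show "{n. \<exists>x\<in>topspace X. \<bar>f n x\<bar> \<ge> \<epsilon>} \<in> I"
    unfolding eq using ideal_UN_finite[OF I fin, of "\<lambda>x. {n. \<bar>f n x\<bar> \<ge> \<epsilon>}"] all by (rule mp)
qed

lemma fin_Iu_Iqn:
  assumes I: "ideal_on_nat I" and fin: "finite (topspace X)" and u: "Iu I X f"
  shows "Iqn I X f"
proof -
  define g where "g n = (if topspace X = {} then 0 else Max ((\<lambda>x. \<bar>f n x\<bar>) ` topspace X))" for n
  have gge: "\<bar>f n x\<bar> \<le> g n" if "x \<in> topspace X" for n x
    using that fin unfolding g_def by auto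
  have g0: "g n \<ge> 0" for n
  proof (cases "topspace X = {}")
    case True then show ?thesis unfolding g_def by simp
  next
    case False
    then obtain x where "x \<in> topspace X" by blast
    then show ?thesis using gge[of x n] by linarith
  qed
  have gsub: "{n. g n \<ge> \<epsilon>} \<subseteq> {n. \<exists>x\<in>topspace X. \<bar>f n x\<bar> \<ge> \<epsilon>}" if "\<epsilon> > 0" for \<epsilon>
  proof
    fix n assume "n \<in> {n. g n \<ge> \<epsilon>}"
    then have ge: "g n \<ge> \<epsilon>" by simp
    then have ne: "topspace X \<noteq> {}" using that unfolding g_def by auto
    then have "g n \<in> (\<lambda>x. \<bar>f n x\<bar>) ` topspace X" unfolding g_def using fin by simp
    then show "n \<in> {n. \<exists>x\<in>topspace X. \<bar>f n x\<bar> \<ge> \<epsilon>}" using ge by auto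
  qed
  define e where "e n = g n + 1 / (real n + 1)" for n
  have epos: "\<forall>n. e n > 0" unfolding e_def using g0 by (simp add: add_nonneg_pos)
  have ec: "Iconv0 I e" unfolding Iconv0_def
  proof (intro allI impI)
    fix \<epsilon> :: real assume ep: "\<epsilon> > 0"
    have "{n. \<bar>e n\<bar> \<ge> \<epsilon>} \<subseteq> {n. g n \<ge> \<epsilon>/2} \<union> {n. \<bar>1 / (real n + 1)\<bar> \<ge> \<epsilon>/2}"
      unfolding e_def using g0 by auto
    moreover have "{n. g n \<ge> \<epsilon>/2} \<in> I"
      using gsub[of "\<epsilon>/2"] ep u ideal_sub[OF I] unfolding Iu_def Iu_on_def
      by (meson half_gt_zero)
    moreover have "{n. \<bar>1 / (real n + 1)\<bar> \<ge> \<epsilon>/2} \<in> I"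
      using inv_conv[OF I] ep unfolding Iconv0_def by (meson half_gt_zero)
    ultimately show "{n. \<bar>e n\<bar> \<ge> \<epsilon>} \<in> I" using ideal_Un[OF I] ideal_sub[OF I] by blast
  qed
  have "\<forall>x\<in>topspace X. {n. \<bar>f n x\<bar> \<ge> e n} \<in> I"
  proof
    fix x assume x: "x \<in> topspace X"
    have lt: "\<bar>f n x\<bar> < e n" for n
    proof -
      have "1 / (real n + 1) > 0" by simp
      then show ?thesis using gge[OF x, of n] unfolding e_def by linarith
    qed
    have "{n. \<bar>f n x\<bar> \<ge> e n} = {}" using lt by (simp add: not_le)
    then show "{n. \<bar>f n x\<bar> \<ge> e n} \<in> I" using ideal_fin[OF I] by simp
  qed
  then show ?thesis unfolding Iqn_def using epos ec by blast
qed

lemma step_lemma: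
  assumes H: "Hausdorff_space X" and S: "openin X S" and inf: "infinite S"
  shows "\<exists>U S'. openin X U \<and> U \<noteq> {} \<and> U \<subseteq> S \<and> openin X S' \<and> S' \<subseteq> S \<and> infinite S' \<and> U \<inter> S' = {}"
proof -
  have T1: "t1_space X" using H by (simp add: Hausdorff_imp_t1_space)
  obtain x where x: "x \<in> S" using inf by (metis finite.emptyI ex_in_conv)
  have "infinite (S - {x})" using inf by simp
  then obtain y where y: "y \<in> S - {x}" by (metis finite.emptyI ex_in_conv)
  have xy: "x \<in> S" "y \<in> S" "x \<noteq> y" using x y by auto
  have Ssub: "S \<subseteq> topspace X" using S by (simp add: openin_subset)
  have xt: "x \<in> topspace X" and yt: "y \<in> topspace X" using xy Ssub by auto
  have hs: "\<forall>x y. x \<in> topspace X \<and> y \<in> topspace X \<and> (x \<noteq> y)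
              \<longrightarrow> (\<exists>U V. openin X U \<and> openin X V \<and> x \<in> U \<and> y \<in> V \<and> disjnt U V)"
    using H by (simp only: Hausdorff_space_def)
  have "\<exists>U V. openin X U \<and> openin X V \<and> x \<in> U \<and> y \<in> V \<and> disjnt U V"
    using hs xt yt xy(3) by blast
  then obtain U V where UV: "openin X U" "openin X V" "x \<in> U" "y \<in> V" "disjnt U V"
    by blast
  define U1 where "U1 = U \<inter> S"
  define V1 where "V1 = V \<inter> S"
  have o: "openin X U1" "openin X V1" using UV S unfolding U1_def V1_def by auto
  have d: "U1 \<inter> V1 = {}" using UV(5) unfolding U1_def V1_def disjnt_def by blast
  have m: "x \<in> U1" "y \<in> V1" using UV xy unfolding U1_def V1_def by auto
  have sub: "U1 \<subseteq> S" "V1 \<subseteq> S" unfolding U1_def V1_def by auto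
  show ?thesis
  proof (cases "infinite U1")
    case True
    then show ?thesis using o d m sub by blast
  next
    case False
    then have fU: "finite U1" by simp
    have "closedin X (U1 - {x})"
      using T1 fU sub Ssub unfolding t1_space_closedin_finite by auto
    then have "openin X (U1 - (U1 - {x}))" using o(1) by blast
    moreover have "U1 - (U1 - {x}) = {x}" using m by blast
    ultimately have ox: "openin X {x}" by simp
    have "openin X (S - {x})" using T1 S xy unfolding t1_space_openin_delete by blast
    moreover have "infinite (S - {x})" using inf by simp
    ultimately show ?thesis using ox xy by (intro exI[of _ "{x}"] exI[of _ "S - {x}"]) auto
  qed
qed

lemma cellular:
  fixes X :: "'a topology"
  assumes H: "Hausdorff_space X" and inf: "infinite (topspace X)"
  shows "\<exists>U :: nat \<Rightarrow> 'a set. (\<forall>n. openin X (U n) \<and> U n \<noteq> {}) \<and> (\<forall>m n. m \<noteq> n \<longrightarrow> U m \<inter> U n = {})"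
proof -
  define P where "P S p \<longleftrightarrow> openin X (fst p) \<and> fst p \<noteq> {} \<and> fst p \<subseteq> S \<and> openin X (snd p) \<and> snd p \<subseteq> S \<and> infinite (snd p) \<and> fst p \<inter> snd p = {}" for S p
  have "\<forall>S. \<exists>p. openin X S \<and> infinite S \<longrightarrow> P S p"
    using step_lemma[OF H] unfolding P_def by fastforce
  then obtain stp where stp: "\<And>S. openin X S \<and> infinite S \<Longrightarrow> P S (stp S)" by metis
  define Sq where "Sq n = ((\<lambda>S. snd (stp S)) ^^ n) (topspace X)" for n
  have Sq0: "Sq 0 = topspace X" and SqS: "Sq (Suc n) = snd (stp (Sq n))" for n unfolding Sq_def by simp_all
  have inv: "openin X (Sq n) \<and> infinite (Sq n)" for n
  proof (induction n)
    case 0 then show ?case using Sq0 inf by simp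
  next
    case (Suc n) then show ?case using stp[of "Sq n"] SqS unfolding P_def by simp
  qed
  have Pn: "P (Sq n) (stp (Sq n))" for n using stp inv by blast
  have dec: "Sq (Suc n) \<subseteq> Sq n" for n using Pn[of n] SqS unfolding P_def by simp
  have decm: "m \<le> n \<Longrightarrow> Sq n \<subseteq> Sq m" for m n
  proof (induction n rule: dec_induct)
    case base then show ?case by simp
  next
    case (step n) then show ?case using dec[of n] by blast
  qed
  define U where "U n = fst (stp (Sq n))" for n
  have disj: "U m \<inter> U n = {}" if "m < n" for m n
  proof -
    have "U n \<subseteq> Sq n" using Pn[of n] unfolding U_def P_def by simp
    also have "\<dots> \<subseteq> Sq (Suc m)" using decm that by simp
    finally show ?thesis using Pn[of m] SqS[of m] unfolding U_def P_def by blast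
  qed
  have A: "\<forall>n. openin X (U n) \<and> U n \<noteq> {}" using Pn unfolding U_def P_def by simp
  have B: "\<forall>m n. m \<noteq> n \<longrightarrow> U m \<inter> U n = {}"
  proof (intro allI impI)
    fix m n :: nat assume "m \<noteq> n"
    then show "U m \<inter> U n = {}" using disj[of m n] disj[of n m] by (cases "m < n") auto
  qed
  show ?thesis using A B by blast
qed

lemma infinite_bad:
  fixes Y :: "'a topology"
  assumes I: "ideal_on_nat I" and N: "normal_T2 Y" and inf: "infinite (topspace Y)"
  shows "\<exists>f. (\<forall>n. continuous_map Y euclideanreal (f n)) \<and> Ip I Y f \<and> Iqn I Y f \<and> Isigu I Y f \<and> \<not> Iu I Y f"
proof -
  have H: "Hausdorff_space Y" and NS: "normal_space Y" using N unfolding normal_T2_def by auto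
  have T1: "t1_space Y" using H by (simp add: Hausdorff_imp_t1_space)
  obtain U :: "nat \<Rightarrow> 'a set" where U0: "\<forall>n. openin Y (U n) \<and> U n \<noteq> {}" and U3: "\<forall>m n. m \<noteq> n \<longrightarrow> U m \<inter> U n = {}"
    using cellular[OF H inf] by blast
  have U: "\<And>n. openin Y (U n)" "\<And>n. U n \<noteq> {}" "\<And>m n. m \<noteq> n \<Longrightarrow> U m \<inter> U n = {}"
    using U0 U3 by auto
  have "\<forall>n. \<exists>x. x \<in> U n" using U(2) by blast
  then obtain xs where xs: "\<And>n. xs n \<in> U n" by metis
  have xst: "xs n \<in> topspace Y" for n using xs U(1) openin_subset by blast
  have "\<forall>n. \<exists>g. continuous_map Y euclideanreal g \<and> g ` (topspace Y - U n) \<subseteq> {0} \<and> g ` {xs n} \<subseteq> {1}"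
  proof
    fix n
    have c1: "closedin Y (topspace Y - U n)" using U(1)[of n] by (simp add: closedin_diff)
    have c2: "closedin Y {xs n}" by (rule closedin_t1_singleton[OF T1 xst])
    have dj: "disjnt (topspace Y - U n) {xs n}" using xs by (simp add: disjnt_def)
    obtain g where "continuous_map Y euclideanreal g" "g ` (topspace Y - U n) \<subseteq> {0}" "g ` {xs n} \<subseteq> {1}"
      using Urysohn_lemma_alt[OF NS c1 c2 dj, where a=0 and b=1] by blast
    then show "\<exists>g. continuous_map Y euclideanreal g \<and> g ` (topspace Y - U n) \<subseteq> {0} \<and> g ` {xs n} \<subseteq> {1}"
      by blast
  qed
  then obtain f where f: "\<And>n. continuous_map Y euclideanreal (f n)"
    "\<And>n. f n ` (topspace Y - U n) \<subseteq> {0}" "\<And>n. f n ` {xs n} \<subseteq> {1}" by metis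
  have fz: "f n x = 0" if "x \<in> topspace Y" "x \<notin> U n" for n x using f(2)[of n] that by blast
  have f1: "f n (xs n) = 1" for n using f(3)[of n] by simp
  have finU: "finite {n. x \<in> U n}" for x
  proof (cases "\<exists>m. x \<in> U m")
    case True
    then obtain m where "x \<in> U m" by blast
    then have "{n. x \<in> U n} \<subseteq> {m}" using U(3) by blast
    then show ?thesis using finite_subset by blast
  next
    case False then show ?thesis by simp
  qed
  have supp: "{n. \<bar>f n x\<bar> \<ge> c} \<subseteq> {n. x \<in> U n}" if "x \<in> topspace Y" "c > 0" for x c
    using fz[OF that(1)] that(2) by force
  have p: "Ip I Y f" unfolding Ip_def Iconv0_def
    using supp finU ideal_fin[OF I] ideal_sub[OF I] by blast
  have q: "Iqn I Y f" unfolding Iqn_def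
  proof (intro exI[of _ "\<lambda>n. 1 / (real n + 1)"] conjI ballI allI)
    show "Iconv0 I (\<lambda>n. 1 / (real n + 1))" by (rule inv_conv[OF I])
  next
    fix n show "0 < 1 / (real n + 1)" by simp
  next
    fix x assume x: "x \<in> topspace Y"
    have "{n. \<bar>f n x\<bar> \<ge> 1 / (real n + 1)} \<subseteq> {n. x \<in> U n}"
      using fz[OF x] by force
    then show "{n. \<bar>f n x\<bar> \<ge> 1 / (real n + 1)} \<in> I"
      using finU ideal_fin[OF I] ideal_sub[OF I] by blast
  qed
  define Xk where "Xk k = {x \<in> topspace Y. \<forall>n\<ge>k. x \<notin> U n}" for k
  have s: "Isigu I Y f" unfolding Isigu_def
  proof (intro exI[of _ Xk] conjI allI)
    show "(\<Union>k. Xk k) = topspace Y"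
    proof
      show "(\<Union>k. Xk k) \<subseteq> topspace Y" unfolding Xk_def by blast
    next
      show "topspace Y \<subseteq> (\<Union>k. Xk k)"
      proof
        fix x assume x: "x \<in> topspace Y"
        obtain k where "{n. x \<in> U n} \<subseteq> {..<k}" using finite_nat_bounded[OF finU[of x]] by blast
        then have "x \<in> Xk k" using x unfolding Xk_def by auto
        then show "x \<in> (\<Union>k. Xk k)" by blast
      qed
    qed
  next
    fix k show "Iu_on I (Xk k) f" unfolding Iu_on_def
    proof (intro allI impI)
      fix \<epsilon> :: real assume ep: "\<epsilon> > 0"
      have "{n. \<exists>x\<in>Xk k. \<bar>f n x\<bar> \<ge> \<epsilon>} \<subseteq> {..<k}"
      proof
        fix n assume "n \<in> {n. \<exists>x\<in>Xk k. \<bar>f n x\<bar> \<ge> \<epsilon>}"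
        then obtain x where x: "x \<in> Xk k" "\<bar>f n x\<bar> \<ge> \<epsilon>" by blast
        show "n \<in> {..<k}"
        proof (rule ccontr)
          assume "n \<notin> {..<k}"
          then have "x \<notin> U n" "x \<in> topspace Y" using x(1) unfolding Xk_def by auto
          then show False using fz x(2) ep by force
        qed
      qed
      then show "{n. \<exists>x\<in>Xk k. \<bar>f n x\<bar> \<ge> \<epsilon>} \<in> I"
        using ideal_fin[OF I] ideal_sub[OF I] by blast
    qed
  qed
  have nu: "\<not> Iu I Y f"
  proof
    assume "Iu I Y f"
    then have "{n. \<exists>x\<in>topspace Y. \<bar>f n x\<bar> \<ge> 1} \<in> I" unfolding Iu_def Iu_on_def by simp
    moreover have "{n. \<exists>x\<in>topspace Y. \<bar>f n x\<bar> \<ge> 1} = UNIV"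
    proof -
      have "\<exists>x\<in>topspace Y. \<bar>f n x\<bar> \<ge> 1" for n
        using xst[of n] f1[of n] by (intro bexI[of _ "xs n"]) auto
      then show ?thesis by blast
    qed
    ultimately show False using ideal_UNIV[OF I] by simp
  qed
  show ?thesis using f(1) p q s nu by blast
qed

lemma class_iff:
  assumes I: "ideal_on_nat I" and N: "normal_T2 Y"
  shows "(in_class (Ip I) (Iu I) Y \<longleftrightarrow> finite (topspace Y)) \<and>
         (in_class (Iqn I) (Iu I) Y \<longleftrightarrow> finite (topspace Y)) \<and>
         (in_class (Isigu I) (Iu I) Y \<longleftrightarrow> finite (topspace Y))"
proof (cases "finite (topspace Y)")
  case True
  have a: "Ip I Y f \<longleftrightarrow> Iu I Y f" for f using fin_Ip_Iu[OF I True] Iu_Ip[OF I] by blast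
  have b: "Iqn I Y f \<longleftrightarrow> Iu I Y f" for f
    using fin_Ip_Iu[OF I True] Iqn_Ip[OF I] fin_Iu_Iqn[OF I True] by blast
  have c: "Isigu I Y f \<longleftrightarrow> Iu I Y f" for f
    using fin_Ip_Iu[OF I True] Isigu_Ip[OF I] Iu_Isigu by blast
  show ?thesis using True N a b c unfolding in_class_def by simp
next
  case False
  obtain f where "\<forall>n. continuous_map Y euclideanreal (f n)" "Ip I Y f" "Iqn I Y f" "Isigu I Y f" "\<not> Iu I Y f"
    using infinite_bad[OF I N False] by blast
  then show ?thesis using False unfolding in_class_def by blast
qed

lemma normal_discrete: "normal_T2 (discrete_topology U)"
  unfolding normal_T2_def by (simp add: normal_space_discrete_topology)

lemma part1:
  assumes I: "ideal_on_nat I" and J: "ideal_on_nat J" and ne: "I \<noteq> J"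
  shows "(\<exists>Y :: nat topology. normal_T2 Y \<and> card (topspace Y) = 1 \<and> \<not> in_class (Ip I) (Iu J) Y) \<and>
       (\<exists>Y :: nat topology. normal_T2 Y \<and> card (topspace Y) = 1 \<and> \<not> in_class (Iqn I) (Iu J) Y) \<and>
       (\<exists>Y :: nat topology. normal_T2 Y \<and> card (topspace Y) = 1 \<and> \<not> in_class (Isigu I) (Iu J) Y)"
proof -
  define Y :: "nat topology" where "Y = discrete_topology {0}"
  have Yt: "topspace Y = {0}" unfolding Y_def by simp
  have NY: "normal_T2 Y" unfolding Y_def by (rule normal_discrete)
  obtain A where A: "(A \<in> I \<and> A \<notin> J) \<or> (A \<in> J \<and> A \<notin> I)" using ne by blast
  define f :: "nat \<Rightarrow> nat \<Rightarrow> real" where "f n x = (if n \<in> A then 1 else 0)" for n x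
  have cont: "\<forall>n. continuous_map Y euclideanreal (f n)" unfolding f_def by simp
  have setA: "{n. \<bar>f n 0\<bar> \<ge> \<epsilon>} = A" if "\<epsilon> > 0" "\<epsilon> \<le> 1" for \<epsilon>
    using that unfolding f_def by auto
  have setsub: "{n. \<bar>f n 0\<bar> \<ge> \<epsilon>} \<subseteq> A" if "\<epsilon> > 0" for \<epsilon>
    using that unfolding f_def by auto
  have "\<not> (Ip I Y f \<longleftrightarrow> Iu J Y f) \<and> \<not> (Iqn I Y f \<longleftrightarrow> Iu J Y f) \<and> \<not> (Isigu I Y f \<longleftrightarrow> Iu J Y f)"
    using A
  proof
    assume A1: "A \<in> I \<and> A \<notin> J"
    have p: "Ip I Y f" unfolding Ip_def Iconv0_def Yt
    proof (intro ballI allI impI)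
      fix x :: nat and \<epsilon> :: real assume "x \<in> {0}" "\<epsilon> > 0"
      then show "{n. \<epsilon> \<le> \<bar>f n x\<bar>} \<in> I" using setsub[of \<epsilon>] A1 ideal_sub[OF I] by auto
    qed
    have u: "Iu I Y f" unfolding Iu_def Iu_on_def Yt
    proof (intro allI impI)
      fix \<epsilon> :: real assume "\<epsilon> > 0"
      then show "{n. \<exists>x\<in>{0}. \<epsilon> \<le> \<bar>f n x\<bar>} \<in> I" using setsub[of \<epsilon>] A1 ideal_sub[OF I] by auto
    qed
    have q: "Iqn I Y f" unfolding Iqn_def Yt
    proof (intro exI[of _ "\<lambda>n. 1 / (real n + 1)"] conjI ballI allI)
      show "Iconv0 I (\<lambda>n. 1 / (real n + 1))" by (rule inv_conv[OF I])
    next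
      fix n show "0 < 1 / (real n + 1)" by simp
    next
      fix x :: nat assume "x \<in> {0}"
      have "{n. \<bar>f n x\<bar> \<ge> 1 / (real n + 1)} \<subseteq> A" unfolding f_def by auto
      then show "{n. \<bar>f n x\<bar> \<ge> 1 / (real n + 1)} \<in> I" using A1 ideal_sub[OF I] by blast
    qed
    have nu: "\<not> Iu J Y f"
    proof
      assume "Iu J Y f"
      then have "{n. \<exists>x\<in>{0::nat}. 1 \<le> \<bar>f n x\<bar>} \<in> J" unfolding Iu_def Iu_on_def Yt
        by (meson zero_less_one)
      moreover have "{n. \<exists>x\<in>{0::nat}. 1 \<le> \<bar>f n x\<bar>} = A" unfolding f_def by auto
      ultimately show False using A1 by simp
    qed
    show ?thesis using p q Iu_Isigu[OF u] nu by blast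
  next
    assume A2: "A \<in> J \<and> A \<notin> I"
    have u: "Iu J Y f" unfolding Iu_def Iu_on_def Yt
    proof (intro allI impI)
      fix \<epsilon> :: real assume "\<epsilon> > 0"
      then show "{n. \<exists>x\<in>{0}. \<epsilon> \<le> \<bar>f n x\<bar>} \<in> J" using setsub[of \<epsilon>] A2 ideal_sub[OF J] by auto
    qed
    have np: "\<not> Ip I Y f"
    proof
      assume "Ip I Y f"
      then have "{n. 1 \<le> \<bar>f n 0\<bar>} \<in> I" unfolding Ip_def Iconv0_def Yt
        by (meson zero_less_one singletonI)
      moreover have "{n. 1 \<le> \<bar>f n 0\<bar>} = A" unfolding f_def by auto
      ultimately show False using A2 by simp
    qed
    show ?thesis using u np Iqn_Ip[OF I] Isigu_Ip[OF I] by blast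
  qed
  then have X: "\<not> in_class (Ip I) (Iu J) Y \<and> \<not> in_class (Iqn I) (Iu J) Y \<and> \<not> in_class (Isigu I) (Iu J) Y"
    unfolding in_class_def using cont by blast
  have c1: "card (topspace Y) = 1" by (simp add: Yt)
  show ?thesis using NY c1 X by blast
qed

lemma empty_in:
  assumes I: "ideal_on_nat I" and J: "ideal_on_nat J" and N: "normal_T2 Y" and e: "topspace Y = {}"
  shows "in_class (Ip I) (Iu J) Y \<and> in_class (Iqn I) (Iu J) Y \<and> in_class (Isigu I) (Iu J) Y"
proof -
  have u: "Iu J Y f" for f unfolding Iu_def Iu_on_def e using ideal_fin[OF J] by simp
  have p: "Ip I Y f" for f unfolding Ip_def e by simp
  have q: "Iqn I Y f" for f unfolding Iqn_def e using inv_conv[OF I]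
    by (intro exI[of _ "\<lambda>n. 1 / (real n + 1)"]) simp
  have s: "Isigu I Y f" for f unfolding Isigu_def e Iu_on_def using ideal_fin[OF I]
    by (intro exI[of _ "\<lambda>k. {}"]) simp
  show ?thesis using N u p q s unfolding in_class_def by simp
qed


theorem corollary3p5:
  fixes I J :: "nat set set" and X :: "'a topology"
  assumes "ideal_on_nat I" and "ideal_on_nat J" and "normal_T2 X"
  shows
   \<comment> \<open>(1): non(...) = 1 when I ~= J: every normal space of cardinality < 1 is in the class,
       and some one-point normal space is not\<close>
   "(I \<noteq> J \<longrightarrow>
      ((\<forall>Y :: 'b topology. normal_T2 Y \<and> topspace Y = {} \<longrightarrow>
          in_class (Ip I) (Iu J) Y \<and> in_class (Iqn I) (Iu J) Y \<and> in_class (Isigu I) (Iu J) Y) \<and>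
       (\<exists>Y :: nat topology. normal_T2 Y \<and> card (topspace Y) = 1 \<and> \<not> in_class (Ip I) (Iu J) Y) \<and>
       (\<exists>Y :: nat topology. normal_T2 Y \<and> card (topspace Y) = 1 \<and> \<not> in_class (Iqn I) (Iu J) Y) \<and>
       (\<exists>Y :: nat topology. normal_T2 Y \<and> card (topspace Y) = 1 \<and> \<not> in_class (Isigu I) (Iu J) Y)))
    \<and>
   \<comment> \<open>(2)\<close>
    (in_class (Ip I) (Iu I) X \<longleftrightarrow> in_class (Iqn I) (Iu I) X) \<and>
    (in_class (Iqn I) (Iu I) X \<longleftrightarrow> in_class (Isigu I) (Iu I) X) \<and>
    (in_class (Isigu I) (Iu I) X \<longleftrightarrow> finite (topspace X))
    \<and>
   \<comment> \<open>(3): non(...) = omega: every finite normal space is in the class,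
       and some countably infinite normal space is not\<close>
    ((\<forall>Y :: 'b topology. normal_T2 Y \<and> finite (topspace Y) \<longrightarrow>
          in_class (Ip I) (Iu I) Y \<and> in_class (Iqn I) (Iu I) Y \<and> in_class (Isigu I) (Iu I) Y) \<and>
     (\<exists>Y :: nat topology. normal_T2 Y \<and> infinite (topspace Y) \<and> \<not> in_class (Ip I) (Iu I) Y) \<and>
     (\<exists>Y :: nat topology. normal_T2 Y \<and> infinite (topspace Y) \<and> \<not> in_class (Iqn I) (Iu I) Y) \<and>
     (\<exists>Y :: nat topology. normal_T2 Y \<and> infinite (topspace Y) \<and> \<not> in_class (Isigu I) (Iu I) Y))
    \<and>
   \<comment> \<open>(4)\<close>
    (\<forall>Y :: 'b topology. normal_T2 Y \<and> infinite (topspace Y) \<longrightarrow>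
       \<not> in_class (Ip I) (Iu I) Y \<and> \<not> in_class (Iqn I) (Iu I) Y \<and> \<not> in_class (Isigu I) (Iu I) Y)"
  proof -
  have N: "normal_T2 (discrete_topology (UNIV :: nat set))" by (rule normal_discrete)
  have inf: "infinite (topspace (discrete_topology (UNIV :: nat set)))" by simp
  note cN = class_iff[OF assms(1) N]
  note cX = class_iff[OF assms(1) assms(3)]
  have cY: "\<And>Y :: 'b topology. normal_T2 Y \<Longrightarrow>
      (in_class (Ip I) (Iu I) Y \<longleftrightarrow> finite (topspace Y)) \<and>
      (in_class (Iqn I) (Iu I) Y \<longleftrightarrow> finite (topspace Y)) \<and>
      (in_class (Isigu I) (Iu I) Y \<longleftrightarrow> finite (topspace Y))"
    using class_iff[OF assms(1)] by blast
  have p1: "I \<noteq> J \<longrightarrow>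
      ((\<forall>Y :: 'b topology. normal_T2 Y \<and> topspace Y = {} \<longrightarrow>
          in_class (Ip I) (Iu J) Y \<and> in_class (Iqn I) (Iu J) Y \<and> in_class (Isigu I) (Iu J) Y) \<and>
       (\<exists>Y :: nat topology. normal_T2 Y \<and> card (topspace Y) = 1 \<and> \<not> in_class (Ip I) (Iu J) Y) \<and>
       (\<exists>Y :: nat topology. normal_T2 Y \<and> card (topspace Y) = 1 \<and> \<not> in_class (Iqn I) (Iu J) Y) \<and>
       (\<exists>Y :: nat topology. normal_T2 Y \<and> card (topspace Y) = 1 \<and> \<not> in_class (Isigu I) (Iu J) Y))"
    using part1[OF assms(1,2)] empty_in[OF assms(1,2)] by blast
  have p3a: "\<forall>Y :: 'b topology. normal_T2 Y \<and> finite (topspace Y) \<longrightarrow>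
          in_class (Ip I) (Iu I) Y \<and> in_class (Iqn I) (Iu I) Y \<and> in_class (Isigu I) (Iu I) Y"
    using cY by blast
  have p4: "\<forall>Y :: 'b topology. normal_T2 Y \<and> infinite (topspace Y) \<longrightarrow>
       \<not> in_class (Ip I) (Iu I) Y \<and> \<not> in_class (Iqn I) (Iu I) Y \<and> \<not> in_class (Isigu I) (Iu I) Y"
    using cY by blast
  show ?thesis
    apply (intro conjI)
    using p1 cX p3a p4 cN N inf by blast+
qed

end
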